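(* Let $X=\bigsqcup_{\lambda\in\Lambda}G_\lambda$ be an MCQ, $R$ a ring, $M$ a left $R$-module, and let $(f_1,f_2,f_3,f_4;\phi_1,\phi_2)$ be a 6-tuple of maps ($f_1,f_2:X\times X\to R$, $f_3,f_4:\bigsqcup_\lambda(G_\lambda\times G_\lambda)\to R$, $\phi_1:X\times X\to M$, $\phi_2:\bigsqcup_\lambda(G_\lambda\times G_\lambda)\to M$) satisfying conditions (0-i)–(4-$\phi$). Define $g_1,g_2:X\times X\to R$, $\psi_1:X\times X\to M$, $\psi_2:\bigsqcup_\lambda(G_\lambda\times G_\lambda)\to M$ by $g_1(x,y)=f_1(e_x,y)$, $g_2(x,y)=f_3(x\triangleleft y,\,x^{-1}\triangleleft y)\,f_2(x,y)\,f_3(e_y,y)$, $\psi_1(x,y)=f_3(x\triangleleft y,\,x^{-1}\triangleleft y)\,\phi_1(x,y)$, $\psi_2(a,b)=f_3(ab,\,b^{-1}a^{-1})\,\phi_2(a,b)$. Then $(g_1,g_2;\psi_1,\psi_2)$ is an augmented MCQ Alexander pair.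
   Context: A multiple conjugation quandle (MCQ) is a set $X=\bigsqcup_{\lambda\in\Lambda}G_\lambda$ that is a disjoint union of groups $G_\lambda$, together with a binary operation $\triangleleft:X\times X\to X$ such that: (i) for all $a,b\in G_\lambda$, $a\triangleleft b=b^{-1}ab$; (ii) for all $x\in X$ and $a,b\in G_\lambda$, $x\triangleleft e_\lambda=x$ and $x\triangleleft(ab)=(x\triangleleft a)\triangleleft b$, where $e_\lambda$ is the identity of $G_\lambda$; (iii) for all $x,y,z\in X$, $(x\triangleleft y)\triangleleft z=(x\triangleleft z)\triangleleft(y\triangleleft z)$; (iv) for all $x\in X$ and $a,b\in G_\lambda$, the elements $a\triangleleft x$ and $b\triangleleft x$ lie in a common group $G_\mu$ and $(ab)\triangleleft x=(a\triangleleft x)(b\triangleleft x)$. For $x\in X$, $G_x$ denotes the group containing $x$, $e_x$ its identity, $x^{-1}$ the inverse of $x$ in $G_x$. $\bigsqcup_{\lambda}(G_\lambda\times G_\lambda)$ is the set of pairs of elements lying in a common group $G_\lambda$. Rings have a multiplicative identity $1\neq0$ and need not be commutative. Conditions (0-i)–(4-$\phi$) on a 6-tuple $(f_1,f_2,f_3,f_4;\phi_1,\phi_2)$: For all $\lambda$ and $a,b,c\in G_\lambda$: (0-i) $f_3(a,b)$, $f_4(a,b)$ invertible; (0-ii) $f_3(ab,c)f_3(a,b)=f_3(a,bc)$; (0-iii) $f_3(ab,c)f_4(a,b)=f_4(a,bc)f_3(b,c)$; (0-iv) $f_4(ab,c)=f_4(a,bc)f_4(b,c)$; (0-$\phi$)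 $f_3(ab,c)\phi_2(a,b)+\phi_2(ab,c)=f_4(a,bc)\phi_2(b,c)+\phi_2(a,bc)$. For all $a,b\in G_\lambda$: (1-i) $f_1(a,b)=f_4(b^{-1},ab)f_3(a,b)$; (1-ii) $f_3(b,b^{-1}ab)+f_4(b,b^{-1}ab)f_2(a,b)=f_4(a,b)$; (1-$\phi$) $f_4(b,b^{-1}ab)\phi_1(a,b)+\phi_2(b,b^{-1}ab)=\phi_2(a,b)$. For all $x\in X$, $a,b\in G_\lambda$: (2-i) $f_1(x,e_\lambda)=1$; (2-ii) $f_1(x,ab)=f_1(x\triangleleft a,b)f_1(x,a)$; (2-iii) $f_2(x,ab)f_3(a,b)=f_1(x\triangleleft a,b)f_2(x,a)$; (2-iv) $f_2(x,ab)f_4(a,b)=f_2(x\triangleleft a,b)$; (2-$\phi$i) $f_2(x,e_\lambda)\phi_2(e_\lambda,e_\lambda)=\phi_1(x,e_\lambda)$; (2-$\phi$ii) $f_2(x,ab)\phi_2(a,b)+\phi_1(x,ab)=f_1(x\triangleleft a,b)\phi_1(x,a)+\phi_1(x\triangleleft a,b)$. For all $x,y,z\in X$: (3-i) $f_1(x\triangleleft y,z)f_1(x,y)=f_1(x\triangleleft z,y\triangleleft z)f_1(x,z)$; (3-ii) $f_1(x\triangleleft y,z)f_2(x,y)=f_2(x\triangleleft z,y\triangleleft z)f_1(y,z)$; (3-iii) $f_2(x\triangleleft y,z)=f_1(x\triangleleft z,y\triangleleft z)f_2(x,z)+f_2(x\triangleleft z,y\triangleleft z)f_2(y,z)$; (3-$\phi$)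 $f_1(x\triangleleft y,z)\phi_1(x,y)+\phi_1(x\triangleleft y,z)=f_1(x\triangleleft z,y\triangleleft z)\phi_1(x,z)+f_2(x\triangleleft z,y\triangleleft z)\phi_1(y,z)+\phi_1(x\triangleleft z,y\triangleleft z)$. For all $a,b\in G_\lambda$, $x\in X$: (4-i) $f_1(ab,x)f_3(a,b)=f_3(a\triangleleft x,b\triangleleft x)f_1(a,x)$; (4-ii) $f_1(ab,x)f_4(a,b)=f_4(a\triangleleft x,b\triangleleft x)f_1(b,x)$; (4-iii) $f_2(ab,x)=f_3(a\triangleleft x,b\triangleleft x)f_2(a,x)+f_4(a\triangleleft x,b\triangleleft x)f_2(b,x)$; (4-$\phi$) $f_1(ab,x)\phi_2(a,b)+\phi_1(ab,x)=f_3(a\triangleleft x,b\triangleleft x)\phi_1(a,x)+f_4(a\triangleleft x,b\triangleleft x)\phi_1(b,x)+\phi_2(a\triangleleft x,b\triangleleft x)$. An MCQ Alexander pair is a pair of maps $g_1,g_2:X\times X\to R$ such that: (A1) for all $a,b\in G_\lambda$: $g_1(a,b)+g_2(a,b)=g_1(a,a^{-1}b)$; (A2) for all $a,b\in G_\lambda$, $x\in X$: $g_1(a,x)=g_1(b,x)$ and $g_2(ab,x)=g_2(a,x)+g_1(b\triangleleft x,a^{-1}\triangleleft x)g_2(b,x)$; (A3) for all $x\in X$, $a,b\in G_\lambda$: $g_1(x,e_\lambda)=1$, $g_1(x,ab)=g_1(x\triangleleft a,b)g_1(x,a)$, $g_2(x,ab)=g_1(x\triangleleft a,b)g_2(x,a)$;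 (A4) for all $x,y,z\in X$: $g_1(x\triangleleft y,z)g_1(x,y)=g_1(x\triangleleft z,y\triangleleft z)g_1(x,z)$; $g_1(x\triangleleft y,z)g_2(x,y)=g_2(x\triangleleft z,y\triangleleft z)g_1(y,z)$; $g_2(x\triangleleft y,z)=g_1(x\triangleleft z,y\triangleleft z)g_2(x,z)+g_2(x\triangleleft z,y\triangleleft z)g_2(y,z)$. For an MCQ Alexander pair $(g_1,g_2)$, a $(g_1,g_2)$-twisted 2-cocycle is a pair $\psi_1:X\times X\to M$, $\psi_2:\bigsqcup_\lambda(G_\lambda\times G_\lambda)\to M$ with: (T1) for $a,b,c\in G_\lambda$: $\psi_2(a,b)+\psi_2(ab,c)=g_1(a,a^{-1})\psi_2(b,c)+\psi_2(a,bc)$; (T2) for $a,b\in G_\lambda$: $g_1(b,b^{-1})\psi_1(a,b)+\psi_2(b,b^{-1}ab)=\psi_2(a,b)$; (T3) for $x\in X$, $a,b\in G_\lambda$: $g_2(x,ab)\psi_2(a,b)+\psi_1(x,ab)=g_1(x\triangleleft a,b)\psi_1(x,a)+\psi_1(x\triangleleft a,b)$; (T4) for $x,y,z\in X$: $g_1(x\triangleleft y,z)\psi_1(x,y)+\psi_1(x\triangleleft y,z)=g_1(x\triangleleft z,y\triangleleft z)\psi_1(x,z)+g_2(x\triangleleft z,y\triangleleft z)\psi_1(y,z)+\psi_1(x\triangleleft z,y\triangleleft z)$; (T5) for $a,b\in G_\lambda$, $x\in X$: $g_1(ab,x)\psi_2(a,b)+\psi_1(ab,x)=\psi_1(a,x)+g_1(a\triangleleft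 x,a^{-1}\triangleleft x)\psi_1(b,x)+\psi_2(a\triangleleft x,b\triangleleft x)$. $(g_1,g_2;\psi_1,\psi_2)$ is an augmented MCQ Alexander pair if $(g_1,g_2)$ is an MCQ Alexander pair and $(\psi_1,\psi_2)$ is a $(g_1,g_2)$-twisted 2-cocycle. *)

theory Defs
  imports Main
begin

text \<open>An MCQ X = disjoint union of groups G_lambda is encoded on a type 'x by:
  idx : 'x => 'l   (x lies in the group G_(idx x); Lambda = range idx),
  mul              (group multiplication, meaningful on pairs in a common group),
  e                (e x = identity of the group containing x),
  iv               (iv x = inverse of x in its group),
  tr               (the quandle operation, tr x y = x triangleleft y).
Maps defined on the disjoint union of G_lambda x G_lambda are encoded as
functions 'x => 'x => _ whose values are only used on pairs in a common group.\<close>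

definition mcq :: "('x \<Rightarrow> 'l) \<Rightarrow> ('x \<Rightarrow> 'x \<Rightarrow> 'x) \<Rightarrow> ('x \<Rightarrow> 'x) \<Rightarrow> ('x \<Rightarrow> 'x)
                    \<Rightarrow> ('x \<Rightarrow> 'x \<Rightarrow> 'x) \<Rightarrow> bool" where
  "mcq idx mul e iv tr \<longleftrightarrow>
     \<comment> \<open>each fibre of idx is a group\<close>
     (\<forall>a b. idx a = idx b \<longrightarrow> idx (mul a b) = idx a) \<and>
     (\<forall>a b c. idx a = idx b \<and> idx b = idx c \<longrightarrow> mul (mul a b) c = mul a (mul b c)) \<and>
     (\<forall>a. idx (e a) = idx a) \<and>
     (\<forall>a b. idx a = idx b \<longrightarrow> e a = e b) \<and>
     (\<forall>a. mul (e a) a = a \<and> mul a (e a) = a) \<and>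
     (\<forall>a. idx (iv a) = idx a \<and> mul a (iv a) = e a \<and> mul (iv a) a = e a) \<and>
     \<comment> \<open>(i)\<close>
     (\<forall>a b. idx a = idx b \<longrightarrow> tr a b = mul (mul (iv b) a) b) \<and>
     \<comment> \<open>(ii)\<close>
     (\<forall>x a. tr x (e a) = x) \<and>
     (\<forall>x a b. idx a = idx b \<longrightarrow> tr x (mul a b) = tr (tr x a) b) \<and>
     \<comment> \<open>(iii)\<close>
     (\<forall>x y z. tr (tr x y) z = tr (tr x z) (tr y z)) \<and>
     \<comment> \<open>(iv)\<close>
     (\<forall>x a b. idx a = idx b \<longrightarrow>
        idx (tr a x) = idx (tr b x) \<and> tr (mul a b) x = mul (tr a x) (tr b x))"

definition left_module :: "('r::ring_1 \<Rightarrow> 'm::ab_group_add \<Rightarrow> 'm) \<Rightarrow> bool" where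
  "left_module smul \<longleftrightarrow>
     (\<forall>r m n. smul r (m + n) = smul r m + smul r n) \<and>
     (\<forall>r s m. smul (r + s) m = smul r m + smul s m) \<and>
     (\<forall>r s m. smul (r * s) m = smul r (smul s m)) \<and>
     (\<forall>m. smul 1 m = m)"

definition invertible_elt :: "'r::ring_1 \<Rightarrow> bool" where
  "invertible_elt r \<longleftrightarrow> (\<exists>u. u * r = 1 \<and> r * u = 1)"

definition six_tuple_conditions ::
  "('x \<Rightarrow> 'l) \<Rightarrow> ('x \<Rightarrow> 'x \<Rightarrow> 'x) \<Rightarrow> ('x \<Rightarrow> 'x) \<Rightarrow> ('x \<Rightarrow> 'x) \<Rightarrow> ('x \<Rightarrow> 'x \<Rightarrow> 'x)
   \<Rightarrow> ('r::ring_1 \<Rightarrow> 'm::ab_group_add \<Rightarrow> 'm)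
   \<Rightarrow> ('x \<Rightarrow> 'x \<Rightarrow> 'r) \<Rightarrow> ('x \<Rightarrow> 'x \<Rightarrow> 'r) \<Rightarrow> ('x \<Rightarrow> 'x \<Rightarrow> 'r) \<Rightarrow> ('x \<Rightarrow> 'x \<Rightarrow> 'r)
   \<Rightarrow> ('x \<Rightarrow> 'x \<Rightarrow> 'm) \<Rightarrow> ('x \<Rightarrow> 'x \<Rightarrow> 'm) \<Rightarrow> bool" where
  "six_tuple_conditions idx mul e iv tr smul f1 f2 f3 f4 \<phi>1 \<phi>2 \<longleftrightarrow>
     \<comment> \<open>(0-i) -- (0-phi)\<close>
     (\<forall>a b. idx a = idx b \<longrightarrow> invertible_elt (f3 a b) \<and> invertible_elt (f4 a b)) \<and>
     (\<forall>a b c. idx a = idx b \<and> idx b = idx c \<longrightarrow>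
        f3 (mul a b) c * f3 a b = f3 a (mul b c) \<and>
        f3 (mul a b) c * f4 a b = f4 a (mul b c) * f3 b c \<and>
        f4 (mul a b) c = f4 a (mul b c) * f4 b c \<and>
        smul (f3 (mul a b) c) (\<phi>2 a b) + \<phi>2 (mul a b) c
          = smul (f4 a (mul b c)) (\<phi>2 b c) + \<phi>2 a (mul b c)) \<and>
     \<comment> \<open>(1-i) -- (1-phi)\<close>
     (\<forall>a b. idx a = idx b \<longrightarrow>
        f1 a b = f4 (iv b) (mul a b) * f3 a b \<and>
        f3 b (mul (mul (iv b) a) b) + f4 b (mul (mul (iv b) a) b) * f2 a b = f4 a b \<and>
        smul (f4 b (mul (mul (iv b) a) b)) (\<phi>1 a b) + \<phi>2 b (mul (mul (iv b) a) b) = \<phi>2 a b) \<and>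
     \<comment> \<open>(2-i) -- (2-phi ii)\<close>
     (\<forall>x a. f1 x (e a) = 1) \<and>
     (\<forall>x a b. idx a = idx b \<longrightarrow>
        f1 x (mul a b) = f1 (tr x a) b * f1 x a \<and>
        f2 x (mul a b) * f3 a b = f1 (tr x a) b * f2 x a \<and>
        f2 x (mul a b) * f4 a b = f2 (tr x a) b \<and>
        smul (f2 x (mul a b)) (\<phi>2 a b) + \<phi>1 x (mul a b)
          = smul (f1 (tr x a) b) (\<phi>1 x a) + \<phi>1 (tr x a) b) \<and>
     (\<forall>x a. smul (f2 x (e a)) (\<phi>2 (e a) (e a)) = \<phi>1 x (e a)) \<and>
     \<comment> \<open>(3-i) -- (3-phi)\<close>
     (\<forall>x y z.
        f1 (tr x y) z * f1 x y = f1 (tr x z) (tr y z) * f1 x z \<and>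
        f1 (tr x y) z * f2 x y = f2 (tr x z) (tr y z) * f1 y z \<and>
        f2 (tr x y) z = f1 (tr x z) (tr y z) * f2 x z + f2 (tr x z) (tr y z) * f2 y z \<and>
        smul (f1 (tr x y) z) (\<phi>1 x y) + \<phi>1 (tr x y) z
          = smul (f1 (tr x z) (tr y z)) (\<phi>1 x z) + smul (f2 (tr x z) (tr y z)) (\<phi>1 y z)
            + \<phi>1 (tr x z) (tr y z)) \<and>
     \<comment> \<open>(4-i) -- (4-phi)\<close>
     (\<forall>a b x. idx a = idx b \<longrightarrow>
        f1 (mul a b) x * f3 a b = f3 (tr a x) (tr b x) * f1 a x \<and>
        f1 (mul a b) x * f4 a b = f4 (tr a x) (tr b x) * f1 b x \<and>
        f2 (mul a b) x = f3 (tr a x) (tr b x) * f2 a x + f4 (tr a x) (tr b x) * f2 b x \<and>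
        smul (f1 (mul a b) x) (\<phi>2 a b) + \<phi>1 (mul a b) x
          = smul (f3 (tr a x) (tr b x)) (\<phi>1 a x) + smul (f4 (tr a x) (tr b x)) (\<phi>1 b x)
            + \<phi>2 (tr a x) (tr b x))"

definition mcq_alexander_pair ::
  "('x \<Rightarrow> 'l) \<Rightarrow> ('x \<Rightarrow> 'x \<Rightarrow> 'x) \<Rightarrow> ('x \<Rightarrow> 'x) \<Rightarrow> ('x \<Rightarrow> 'x) \<Rightarrow> ('x \<Rightarrow> 'x \<Rightarrow> 'x)
   \<Rightarrow> ('x \<Rightarrow> 'x \<Rightarrow> 'r::ring_1) \<Rightarrow> ('x \<Rightarrow> 'x \<Rightarrow> 'r) \<Rightarrow> bool" where
  "mcq_alexander_pair idx mul e iv tr g1 g2 \<longleftrightarrow>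
     \<comment> \<open>(A1)\<close>
     (\<forall>a b. idx a = idx b \<longrightarrow> g1 a b + g2 a b = g1 a (mul (iv a) b)) \<and>
     \<comment> \<open>(A2)\<close>
     (\<forall>a b x. idx a = idx b \<longrightarrow>
        g1 a x = g1 b x \<and>
        g2 (mul a b) x = g2 a x + g1 (tr b x) (tr (iv a) x) * g2 b x) \<and>
     \<comment> \<open>(A3)\<close>
     (\<forall>x a. g1 x (e a) = 1) \<and>
     (\<forall>x a b. idx a = idx b \<longrightarrow>
        g1 x (mul a b) = g1 (tr x a) b * g1 x a \<and>
        g2 x (mul a b) = g1 (tr x a) b * g2 x a) \<and>
     \<comment> \<open>(A4)\<close>
     (\<forall>x y z.
        g1 (tr x y) z * g1 x y = g1 (tr x z) (tr y z) * g1 x z \<and>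
        g1 (tr x y) z * g2 x y = g2 (tr x z) (tr y z) * g1 y z \<and>
        g2 (tr x y) z = g1 (tr x z) (tr y z) * g2 x z + g2 (tr x z) (tr y z) * g2 y z)"

definition twisted_2_cocycle ::
  "('x \<Rightarrow> 'l) \<Rightarrow> ('x \<Rightarrow> 'x \<Rightarrow> 'x) \<Rightarrow> ('x \<Rightarrow> 'x) \<Rightarrow> ('x \<Rightarrow> 'x) \<Rightarrow> ('x \<Rightarrow> 'x \<Rightarrow> 'x)
   \<Rightarrow> ('r::ring_1 \<Rightarrow> 'm::ab_group_add \<Rightarrow> 'm)
   \<Rightarrow> ('x \<Rightarrow> 'x \<Rightarrow> 'r) \<Rightarrow> ('x \<Rightarrow> 'x \<Rightarrow> 'r) \<Rightarrow> ('x \<Rightarrow> 'x \<Rightarrow> 'm) \<Rightarrow> ('x \<Rightarrow> 'x \<Rightarrow> 'm) \<Rightarrow> bool" where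
  "twisted_2_cocycle idx mul e iv tr smul g1 g2 \<psi>1 \<psi>2 \<longleftrightarrow>
     \<comment> \<open>(T1)\<close>
     (\<forall>a b c. idx a = idx b \<and> idx b = idx c \<longrightarrow>
        \<psi>2 a b + \<psi>2 (mul a b) c = smul (g1 a (iv a)) (\<psi>2 b c) + \<psi>2 a (mul b c)) \<and>
     \<comment> \<open>(T2)\<close>
     (\<forall>a b. idx a = idx b \<longrightarrow>
        smul (g1 b (iv b)) (\<psi>1 a b) + \<psi>2 b (mul (mul (iv b) a) b) = \<psi>2 a b) \<and>
     \<comment> \<open>(T3)\<close>
     (\<forall>x a b. idx a = idx b \<longrightarrow>
        smul (g2 x (mul a b)) (\<psi>2 a b) + \<psi>1 x (mul a b)
          = smul (g1 (tr x a) b) (\<psi>1 x a) + \<psi>1 (tr x a) b) \<and>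
     \<comment> \<open>(T4)\<close>
     (\<forall>x y z.
        smul (g1 (tr x y) z) (\<psi>1 x y) + \<psi>1 (tr x y) z
          = smul (g1 (tr x z) (tr y z)) (\<psi>1 x z) + smul (g2 (tr x z) (tr y z)) (\<psi>1 y z)
            + \<psi>1 (tr x z) (tr y z)) \<and>
     \<comment> \<open>(T5)\<close>
     (\<forall>a b x. idx a = idx b \<longrightarrow>
        smul (g1 (mul a b) x) (\<psi>2 a b) + \<psi>1 (mul a b) x
          = \<psi>1 a x + smul (g1 (tr a x) (tr (iv a) x)) (\<psi>1 b x) + \<psi>2 (tr a x) (tr b x))"

definition augmented_mcq_alexander_pair where
  "augmented_mcq_alexander_pair idx mul e iv tr smul g1 g2 \<psi>1 \<psi>2 \<longleftrightarrow>
     mcq_alexander_pair idx mul e iv tr g1 g2 \<and>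
     twisted_2_cocycle idx mul e iv tr smul g1 g2 \<psi>1 \<psi>2"

end

theory Submission
  imports Defs
begin


definition ri :: "'a::ring_1 \<Rightarrow> 'a" where "ri u = (SOME v. v * u = 1 \<and> u * v = 1)"

lemma ri: assumes "invertible_elt u" shows "ri u * u = 1" "u * ri u = 1"
proof -
  have "\<exists>v. v * u = 1 \<and> u * v = 1" using assms unfolding invertible_elt_def by blast
  then have "ri u * u = 1 \<and> u * ri u = 1" unfolding ri_def by (rule someI_ex)
  then show "ri u * u = 1" "u * ri u = 1" by auto
qed

lemma ri_l[simp]: "invertible_elt u \<Longrightarrow> ri u * (u * z) = z"
  by (simp add: mult.assoc[symmetric] ri)
lemma ri_r[simp]: "invertible_elt u \<Longrightarrow> u * (ri u * z) = z"
  by (simp add: mult.assoc[symmetric] ri)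
lemma ri_l1[simp]: "invertible_elt u \<Longrightarrow> ri u * u = 1" by (rule ri)
lemma ri_r1[simp]: "invertible_elt u \<Longrightarrow> u * ri u = 1" by (rule ri)

lemma ri_unique: assumes "invertible_elt u" "v * u = 1" shows "v = ri u"
proof -
  have "v = v * (u * ri u)" using assms by simp
  also have "\<dots> = (v * u) * ri u" by (simp add: mult.assoc)
  finally show ?thesis using assms by simp
qed

lemma idem_one: assumes "invertible_elt u" "u * u = u" shows "u = 1"
proof -
  have "u = ri u * (u * u)" using assms(1) by (simp only: ri_l)
  also have "\<dots> = ri u * u" using assms(2) by (simp only:)
  also have "\<dots> = 1" using assms(1) by (simp only: ri_l1)
  finally show ?thesis .
qed

lemma inv_mult: "invertible_elt u \<Longrightarrow> invertible_elt v \<Longrightarrow> invertible_elt (u * v)"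
proof -
  assume "invertible_elt u" "invertible_elt v"
  then obtain a b where "a * u = 1" "u * a = 1" "b * v = 1" "v * b = 1" unfolding invertible_elt_def by blast
  then have "(b * a) * (u * v) = 1" "(u * v) * (b * a) = 1"
    by (simp_all add: mult.assoc, simp_all add: mult.assoc[symmetric])
  then show ?thesis unfolding invertible_elt_def by blast
qed

lemma inv_ri: assumes "invertible_elt u" shows "invertible_elt (ri u)"
  unfolding invertible_elt_def using assms by (intro exI[of _ u]) simp

locale L =
  fixes idx :: "'x \<Rightarrow> 'l" and mul :: "'x \<Rightarrow> 'x \<Rightarrow> 'x" and e iv :: "'x \<Rightarrow> 'x"
    and tr :: "'x \<Rightarrow> 'x \<Rightarrow> 'x"
    and smul :: "'r::ring_1 \<Rightarrow> 'm::ab_group_add \<Rightarrow> 'm"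
    and f1 f2 f3 f4 :: "'x \<Rightarrow> 'x \<Rightarrow> 'r" and \<phi>1 \<phi>2 :: "'x \<Rightarrow> 'x \<Rightarrow> 'm"
  assumes mcq: "mcq idx mul e iv tr"
    and lm: "left_module smul"
    and six: "six_tuple_conditions idx mul e iv tr smul f1 f2 f3 f4 \<phi>1 \<phi>2"
begin

lemmas M = mcq[unfolded mcq_def]
lemmas M0 = conjunct1[OF M]
lemmas M1 = conjunct1[OF conjunct2[OF M]]
lemmas M2 = conjunct1[OF conjunct2[OF conjunct2[OF M]]]
lemmas M3 = conjunct1[OF conjunct2[OF conjunct2[OF conjunct2[OF M]]]]
lemmas M4 = conjunct1[OF conjunct2[OF conjunct2[OF conjunct2[OF conjunct2[OF M]]]]]
lemmas M5 = conjunct1[OF conjunct2[OF conjunct2[OF conjunct2[OF conjunct2[OF conjunct2[OF M]]]]]]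
lemmas M6 = conjunct1[OF conjunct2[OF conjunct2[OF conjunct2[OF conjunct2[OF conjunct2[OF conjunct2[OF M]]]]]]]
lemmas M7 = conjunct1[OF conjunct2[OF conjunct2[OF conjunct2[OF conjunct2[OF conjunct2[OF conjunct2[OF conjunct2[OF M]]]]]]]]
lemmas M8 = conjunct1[OF conjunct2[OF conjunct2[OF conjunct2[OF conjunct2[OF conjunct2[OF conjunct2[OF conjunct2[OF conjunct2[OF M]]]]]]]]]
lemmas M9 = conjunct1[OF conjunct2[OF conjunct2[OF conjunct2[OF conjunct2[OF conjunct2[OF conjunct2[OF conjunct2[OF conjunct2[OF conjunct2[OF M]]]]]]]]]]
lemmas M10 = conjunct2[OF conjunct2[OF conjunct2[OF conjunct2[OF conjunct2[OF conjunct2[OF conjunct2[OF conjunct2[OF conjunct2[OF conjunct2[OF M]]]]]]]]]]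

lemma idx_mul[simp]: "idx a = idx b \<Longrightarrow> idx (mul a b) = idx a" by (rule M0[rule_format])
lemma massoc: "idx a = idx b \<Longrightarrow> idx b = idx c \<Longrightarrow> mul (mul a b) c = mul a (mul b c)"
  by (rule M1[rule_format], rule conjI)
lemma idx_e[simp]: "idx (e a) = idx a" by (rule M2[rule_format])
lemma e_eq: "idx a = idx b \<Longrightarrow> e a = e b" by (rule M3[rule_format])
lemma mul_e[simp]: "mul (e a) a = a" "mul a (e a) = a" by (rule M4[rule_format, THEN conjunct1], rule M4[rule_format, THEN conjunct2])
lemma idx_iv[simp]: "idx (iv a) = idx a" by (rule M5[rule_format, THEN conjunct1])
lemma mul_iv[simp]: "mul a (iv a) = e a" "mul (iv a) a = e a"
  by (rule M5[rule_format, THEN conjunct2, THEN conjunct1], rule M5[rule_format, THEN conjunct2, THEN conjunct2])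
lemma tr_grp: "idx a = idx b \<Longrightarrow> tr a b = mul (mul (iv b) a) b" by (rule M6[rule_format])
lemma tr_e[simp]: "tr x (e a) = x" by (rule M7[rule_format])
lemma tr_mul: "idx a = idx b \<Longrightarrow> tr x (mul a b) = tr (tr x a) b" by (rule M8[rule_format])
lemma tr_tr: "tr (tr x y) z = tr (tr x z) (tr y z)" by (rule M9[rule_format])
lemma idx_tr: "idx a = idx b \<Longrightarrow> idx (tr a x) = idx (tr b x)" by (rule M10[rule_format, THEN conjunct1])
lemma tr_hom: "idx a = idx b \<Longrightarrow> tr (mul a b) x = mul (tr a x) (tr b x)" by (rule M10[rule_format, THEN conjunct2])

lemma e_mul[simp]: "idx a = idx b \<Longrightarrow> mul (e a) b = b" using e_eq[of a b] by simp
lemma mul_e'[simp]: "idx a = idx b \<Longrightarrow> mul b (e a) = b" using e_eq[of a b] by simp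
lemma e_e[simp]: "e (e a) = e a" by (rule e_eq) simp
lemma e_iv[simp]: "e (iv a) = e a" by (rule e_eq) simp
lemma e_mul2[simp]: "idx a = idx b \<Longrightarrow> e (mul a b) = e a" by (rule e_eq) simp

lemma iv_unique: assumes "idx a = idx b" "mul a b = e a" shows "b = iv a"
proof -
  have "iv a = mul (iv a) (mul a b)" using assms by simp
  also have "\<dots> = mul (mul (iv a) a) b" by (rule massoc[symmetric]) (use assms in auto)
  also have "\<dots> = b" using assms by simp
  finally show ?thesis by simp
qed

lemma iv_iv[simp]: "iv (iv a) = a"
  using iv_unique[of "iv a" a] by simp

lemma idem_e: assumes "u = mul u u" shows "u = e u"
proof -
  have "e u = mul (iv u) u" by simp
  also have "\<dots> = mul (iv u) (mul u u)" by (simp only: assms[symmetric])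
  also have "\<dots> = mul (mul (iv u) u) u" by (rule massoc[symmetric]) auto
  also have "\<dots> = u" by simp
  finally show ?thesis by simp
qed

lemma tr_e'[simp]: "tr (e x) y = e (tr x y)"
proof -
  have "tr (e x) y = tr (mul (e x) (e x)) y" by simp
  also have "\<dots> = mul (tr (e x) y) (tr (e x) y)" by (rule tr_hom) simp
  finally have "tr (e x) y = e (tr (e x) y)" by (rule idem_e)
  moreover have "idx (tr (e x) y) = idx (tr x y)" by (rule idx_tr) simp
  ultimately show ?thesis using e_eq[of "tr (e x) y" "tr x y"] by (simp only:)
qed

lemma idx_tr2[simp]: "idx (tr (iv a) x) = idx (tr a x)" "idx (tr (e a) x) = idx (tr a x)"
  by (rule idx_tr, simp)+

lemma tr_iv: "tr (iv x) y = iv (tr x y)"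
proof -
  have "mul (tr x y) (tr (iv x) y) = tr (mul x (iv x)) y" by (rule tr_hom[symmetric]) simp
  also have "\<dots> = e (tr x y)" by simp
  finally show ?thesis using iv_unique[of "tr x y" "tr (iv x) y"] by simp
qed

lemma iv_mul: assumes "idx a = idx b" shows "iv (mul a b) = mul (iv b) (iv a)"
proof -
  have "mul (mul a b) (mul (iv b) (iv a)) = mul a (mul b (mul (iv b) (iv a)))"
    using assms by (intro massoc) auto
  also have "mul b (mul (iv b) (iv a)) = mul (mul b (iv b)) (iv a)"
    using assms by (intro massoc[symmetric]) auto
  also have "\<dots> = iv a" using assms by simp
  also have "mul a (iv a) = e (mul a b)" using assms by simp
  finally show ?thesis using assms iv_unique[of "mul a b" "mul (iv b) (iv a)"] by simp
qed

end



context L begin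

lemmas S = six[unfolded six_tuple_conditions_def]
lemmas S0 = conjunct1[OF S]
lemmas S1 = conjunct1[OF conjunct2[OF S]]
lemmas S2 = conjunct1[OF conjunct2[OF conjunct2[OF S]]]
lemmas S3 = conjunct1[OF conjunct2[OF conjunct2[OF conjunct2[OF S]]]]
lemmas S4 = conjunct1[OF conjunct2[OF conjunct2[OF conjunct2[OF conjunct2[OF S]]]]]
lemmas S6 = conjunct1[OF conjunct2[OF conjunct2[OF conjunct2[OF conjunct2[OF conjunct2[OF conjunct2[OF S]]]]]]]
lemmas S7 = conjunct2[OF conjunct2[OF conjunct2[OF conjunct2[OF conjunct2[OF conjunct2[OF conjunct2[OF S]]]]]]]

lemmas f3_inv = S0[rule_format, THEN conjunct1]
lemmas f4_inv = S0[rule_format, THEN conjunct2]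
lemmas s0ii = S1[rule_format, OF conjI, THEN conjunct1]
lemmas s0iii = S1[rule_format, OF conjI, THEN conjunct2, THEN conjunct1]
lemmas s0iv = S1[rule_format, OF conjI, THEN conjunct2, THEN conjunct2, THEN conjunct1]
lemmas s0phi = S1[rule_format, OF conjI, THEN conjunct2, THEN conjunct2, THEN conjunct2]
lemmas s1i = S2[rule_format, THEN conjunct1]
lemmas s1ii = S2[rule_format, THEN conjunct2, THEN conjunct1]
lemmas s1phi = S2[rule_format, THEN conjunct2, THEN conjunct2]
lemmas s2i = S3[rule_format]
lemmas s2ii = S4[rule_format, THEN conjunct1]
lemmas s2iii = S4[rule_format, THEN conjunct2, THEN conjunct1]
lemmas s2phi = S4[rule_format, THEN conjunct2, THEN conjunct2, THEN conjunct2]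
lemmas s3i = S6[rule_format, THEN conjunct1]
lemmas s3ii = S6[rule_format, THEN conjunct2, THEN conjunct1]
lemmas s3iii = S6[rule_format, THEN conjunct2, THEN conjunct2, THEN conjunct1]
lemmas s3phi = S6[rule_format, THEN conjunct2, THEN conjunct2, THEN conjunct2]
lemmas s4i = S7[rule_format, THEN conjunct1]
lemmas s4iii = S7[rule_format, THEN conjunct2, THEN conjunct2, THEN conjunct1]
lemmas s4phi = S7[rule_format, THEN conjunct2, THEN conjunct2, THEN conjunct2]

lemmas LM = lm[unfolded left_module_def]
lemma sm_add[simp]: "smul r (m + n) = smul r m + smul r n" using LM by blast
lemma sm_addl[simp]: "smul (r + s) m = smul r m + smul s m" using LM by blast
lemma sm_mult[simp]: "smul (r * s) m = smul r (smul s m)" using LM by blast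
lemma sm_one[simp]: "smul 1 m = m" using LM by blast
lemma sm_c1[simp]: "invertible_elt u \<Longrightarrow> smul (ri u) (smul u m) = m"
  by (metis sm_mult sm_one ri_l1)
lemma sm_c2[simp]: "invertible_elt u \<Longrightarrow> smul u (smul (ri u) m) = m"
  by (metis sm_mult sm_one ri_r1)

definition H where "H x = f3 (e x) x"

lemma H_inv[simp]: "invertible_elt (H x)"
  unfolding H_def by (rule f3_inv) simp

lemma f3_ae: "f3 a (e a) = 1"
proof -
  have "f3 (mul a (e a)) (e a) * f3 a (e a) = f3 a (mul (e a) (e a))" by (rule s0ii) simp_all
  then have "f3 a (e a) * f3 a (e a) = f3 a (e a)" by simp
  then show ?thesis by (intro idem_one f3_inv) simp_all
qed

lemma H_e[simp]: "H (e a) = 1" unfolding H_def using f3_ae[of "e a"] by simp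

lemma C0: assumes "idx a = idx b" shows "f3 a b * H a = H (mul a b)"
proof -
  have "f3 (mul (e a) a) b * f3 (e a) a = f3 (e a) (mul a b)" by (rule s0ii) (use assms in simp_all)
  then show ?thesis using assms unfolding H_def by simp
qed

lemma f3_split: assumes "idx a = idx b" shows "f3 a b = H (mul a b) * ri (H a)"
proof -
  have "f3 a b = f3 a b * H a * ri (H a)" by (simp add: mult.assoc)
  then show ?thesis using C0[OF assms] by simp
qed

lemma f3_civ: "f3 c (iv c) = ri (H c)"
  using f3_split[of c "iv c"] by simp

lemma g1_conv: "f1 (e x) y = ri (H (tr x y)) * f1 x y * H x"
proof -
  have "f1 (mul (e x) x) y * f3 (e x) x = f3 (tr (e x) y) (tr x y) * f1 (e x) y"
    by (rule s4i) simp
  then have "f1 x y * H x = H (tr x y) * f1 (e x) y" unfolding H_def by simp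
  then have "ri (H (tr x y)) * (f1 x y * H x) = f1 (e x) y" by simp
  then show ?thesis by (simp add: mult.assoc)
qed

lemma g2_conv: "f3 (tr x y) (tr (iv x) y) * f2 x y * f3 (e y) y = ri (H (tr x y)) * f2 x y * H y"
  by (simp add: tr_iv f3_civ H_def)

lemma p1_conv: "smul (f3 (tr x y) (tr (iv x) y)) (\<phi>1 x y) = smul (ri (H (tr x y))) (\<phi>1 x y)"
  by (simp add: tr_iv f3_civ)

lemma p2_conv: "idx a = idx b \<Longrightarrow> smul (f3 (mul a b) (mul (iv b) (iv a))) (\<phi>2 a b) = smul (ri (H (mul a b))) (\<phi>2 a b)"
  by (simp add: iv_mul[symmetric] f3_civ)

end



context L begin

definition F1 where "F1 x y = ri (H (tr x y)) * f1 x y * H x"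
definition F2 where "F2 x y = ri (H (tr x y)) * f2 x y * H y"
definition F4 where "F4 a b = ri (H (mul a b)) * f4 a b * H b"
definition P1 where "P1 x y = smul (ri (H (tr x y))) (\<phi>1 x y)"
definition P2 where "P2 a b = smul (ri (H (mul a b))) (\<phi>2 a b)"

lemma mul_canc[simp]: "idx b = idx z \<Longrightarrow> mul b (mul (iv b) z) = z"
  "idx b = idx z \<Longrightarrow> mul (iv b) (mul b z) = z"
proof -
  assume "idx b = idx z"
  then show "mul b (mul (iv b) z) = z" using massoc[of b "iv b" z] by simp
next
  assume "idx b = idx z"
  then show "mul (iv b) (mul b z) = z" using massoc[of "iv b" b z] by simp
qed

lemma G03: assumes "idx a = idx b" "idx b = idx c" shows "F4 a b = F4 a (mul b c)"
proof -
  have "ri (H (mul (mul a b) c)) * (f3 (mul a b) c * f4 a b) * H b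
      = ri (H (mul (mul a b) c)) * (f4 a (mul b c) * f3 b c) * H b"
    using s0iii[OF assms] by simp
  then show ?thesis using assms by (simp add: F4_def f3_split mult.assoc massoc)
qed

lemma G04: assumes "idx a = idx b" "idx b = idx c" shows "F4 (mul a b) c = F4 a (mul b c) * F4 b c"
proof -
  have "ri (H (mul (mul a b) c)) * f4 (mul a b) c * H c
      = ri (H (mul (mul a b) c)) * (f4 a (mul b c) * f4 b c) * H c"
    using s0iv[OF assms] by simp
  then show ?thesis using assms by (simp add: F4_def mult.assoc massoc)
qed

lemma G0phi: assumes "idx a = idx b" "idx b = idx c"
  shows "P2 a b + P2 (mul a b) c = smul (F4 a (mul b c)) (P2 b c) + P2 a (mul b c)"
proof -
  have "smul (ri (H (mul (mul a b) c))) (smul (f3 (mul a b) c) (\<phi>2 a b) + \<phi>2 (mul a b) c)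
      = smul (ri (H (mul (mul a b) c))) (smul (f4 a (mul b c)) (\<phi>2 b c) + \<phi>2 a (mul b c))"
    using s0phi[OF assms] by simp
  then show ?thesis using assms by (simp add: P2_def F4_def f3_split massoc)
qed

lemma G1i: assumes "idx a = idx b" shows "F1 a b = F4 (iv b) (mul a b)"
proof -
  have "ri (H (tr a b)) * f1 a b * H a = ri (H (tr a b)) * (f4 (iv b) (mul a b) * f3 a b) * H a"
    using s1i[OF assms] by simp
  then show ?thesis using assms by (simp add: F1_def F4_def f3_split mult.assoc massoc tr_grp)
qed

lemma G1ii: assumes "idx a = idx b" shows "1 + F4 b (tr a b) * F2 a b = F4 a b"
proof -
  have "ri (H (mul a b)) * (f3 b (mul (mul (iv b) a) b) + f4 b (mul (mul (iv b) a) b) * f2 a b) * H b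
      = ri (H (mul a b)) * f4 a b * H b"
    using s1ii[OF assms] by simp
  then show ?thesis using assms
    by (simp add: F2_def F4_def f3_split mult.assoc massoc tr_grp distrib_left distrib_right)
qed

lemma G1phi: assumes "idx a = idx b"
  shows "smul (F4 b (tr a b)) (P1 a b) + P2 b (tr a b) = P2 a b"
proof -
  have "smul (ri (H (mul a b))) (smul (f4 b (mul (mul (iv b) a) b)) (\<phi>1 a b) + \<phi>2 b (mul (mul (iv b) a) b))
      = smul (ri (H (mul a b))) (\<phi>2 a b)"
    using s1phi[OF assms] by simp
  then show ?thesis using assms
    by (simp add: P1_def P2_def F4_def massoc tr_grp)
qed

lemma G2i: "F1 x (e a) = 1"
  by (simp add: F1_def s2i)

lemma G2ii: assumes "idx a = idx b" shows "F1 x (mul a b) = F1 (tr x a) b * F1 x a"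
proof -
  have "ri (H (tr (tr x a) b)) * f1 x (mul a b) * H x = ri (H (tr (tr x a) b)) * (f1 (tr x a) b * f1 x a) * H x"
    using s2ii[OF assms] by simp
  then show ?thesis using assms by (simp add: F1_def mult.assoc tr_mul)
qed

lemma G2iii: assumes "idx a = idx b" shows "F2 x (mul a b) = F1 (tr x a) b * F2 x a"
proof -
  have "ri (H (tr (tr x a) b)) * (f2 x (mul a b) * f3 a b) * H a = ri (H (tr (tr x a) b)) * (f1 (tr x a) b * f2 x a) * H a"
    using s2iii[OF assms] by simp
  then show ?thesis using assms by (simp add: F1_def F2_def f3_split mult.assoc tr_mul)
qed

lemma G2phi: assumes "idx a = idx b"
  shows "smul (F2 x (mul a b)) (P2 a b) + P1 x (mul a b) = smul (F1 (tr x a) b) (P1 x a) + P1 (tr x a) b"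
proof -
  have "smul (ri (H (tr (tr x a) b))) (smul (f2 x (mul a b)) (\<phi>2 a b) + \<phi>1 x (mul a b))
     = smul (ri (H (tr (tr x a) b))) (smul (f1 (tr x a) b) (\<phi>1 x a) + \<phi>1 (tr x a) b)"
    using s2phi[OF assms] by simp
  then show ?thesis using assms by (simp add: F1_def F2_def P1_def P2_def tr_mul)
qed

lemma G3i: "F1 (tr x y) z * F1 x y = F1 (tr x z) (tr y z) * F1 x z"
proof -
  have "ri (H (tr (tr x y) z)) * (f1 (tr x y) z * f1 x y) * H x = ri (H (tr (tr x y) z)) * (f1 (tr x z) (tr y z) * f1 x z) * H x"
    using s3i by simp
  then show ?thesis by (simp add: F1_def mult.assoc tr_tr[of x y z])
qed

lemma G3ii: "F1 (tr x y) z * F2 x y = F2 (tr x z) (tr y z) * F1 y z"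
proof -
  have "ri (H (tr (tr x y) z)) * (f1 (tr x y) z * f2 x y) * H y = ri (H (tr (tr x y) z)) * (f2 (tr x z) (tr y z) * f1 y z) * H y"
    using s3ii by simp
  then show ?thesis by (simp add: F1_def F2_def mult.assoc tr_tr[of x y z])
qed

lemma G3iii: "F2 (tr x y) z = F1 (tr x z) (tr y z) * F2 x z + F2 (tr x z) (tr y z) * F2 y z"
proof -
  define W where "W = tr (tr x z) (tr y z)"
  have r1: "F1 (tr x z) (tr y z) * F2 x z = ri (H W) * (f1 (tr x z) (tr y z) * f2 x z) * H z"
    unfolding W_def F1_def F2_def by (simp add: mult.assoc)
  have r2: "F2 (tr x z) (tr y z) * F2 y z = ri (H W) * (f2 (tr x z) (tr y z) * f2 y z) * H z"
    unfolding W_def F2_def by (simp add: mult.assoc)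
  have "F2 (tr x y) z = ri (H W) * f2 (tr x y) z * H z"
    unfolding W_def F2_def by (simp only: tr_tr[of x y z])
  also have "f2 (tr x y) z = f1 (tr x z) (tr y z) * f2 x z + f2 (tr x z) (tr y z) * f2 y z"
    by (rule s3iii)
  also have "ri (H W) * (f1 (tr x z) (tr y z) * f2 x z + f2 (tr x z) (tr y z) * f2 y z) * H z
     = ri (H W) * (f1 (tr x z) (tr y z) * f2 x z) * H z + ri (H W) * (f2 (tr x z) (tr y z) * f2 y z) * H z"
    by (simp only: distrib_left distrib_right)
  finally show ?thesis using r1 r2 by simp
qed

lemma G3phi: "smul (F1 (tr x y) z) (P1 x y) + P1 (tr x y) z
          = smul (F1 (tr x z) (tr y z)) (P1 x z) + smul (F2 (tr x z) (tr y z)) (P1 y z)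
            + P1 (tr x z) (tr y z)"
proof -
  have "smul (ri (H (tr (tr x y) z))) (smul (f1 (tr x y) z) (\<phi>1 x y) + \<phi>1 (tr x y) z)
     = smul (ri (H (tr (tr x y) z))) (smul (f1 (tr x z) (tr y z)) (\<phi>1 x z) + smul (f2 (tr x z) (tr y z)) (\<phi>1 y z)
            + \<phi>1 (tr x z) (tr y z))"
    using s3phi by simp
  then show ?thesis by (simp add: F1_def F2_def P1_def tr_tr[of x y z])
qed

lemma G4iii: assumes "idx a = idx b" shows "F2 (mul a b) x = F2 a x + F4 (tr a x) (tr b x) * F2 b x"
proof -
  have i: "idx (tr a x) = idx (tr b x)" by (rule idx_tr[OF assms])
  have "ri (H (tr (mul a b) x)) * f2 (mul a b) x * H x = ri (H (tr (mul a b) x)) * (f3 (tr a x) (tr b x) * f2 a x + f4 (tr a x) (tr b x) * f2 b x) * H x"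
    using s4iii[OF assms] by simp
  then show ?thesis using assms i by (simp add: F2_def F4_def f3_split mult.assoc tr_hom distrib_left distrib_right)
qed

lemma G4phi: assumes "idx a = idx b"
  shows "smul (F1 (mul a b) x) (P2 a b) + P1 (mul a b) x
          = P1 a x + smul (F4 (tr a x) (tr b x)) (P1 b x) + P2 (tr a x) (tr b x)"
proof -
  have i: "idx (tr a x) = idx (tr b x)" by (rule idx_tr[OF assms])
  have "smul (ri (H (tr (mul a b) x))) (smul (f1 (mul a b) x) (\<phi>2 a b) + \<phi>1 (mul a b) x)
      = smul (ri (H (tr (mul a b) x))) (smul (f3 (tr a x) (tr b x)) (\<phi>1 a x) + smul (f4 (tr a x) (tr b x)) (\<phi>1 b x)
            + \<phi>2 (tr a x) (tr b x))"
    using s4phi[OF assms] by simp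
  then show ?thesis using assms i by (simp add: F1_def F4_def P1_def P2_def f3_split tr_hom)
qed

end



context L begin

lemma F4_inv: assumes "idx a = idx b" shows "invertible_elt (F4 a b)"
  unfolding F4_def
  by (intro inv_mult inv_ri H_inv f4_inv assms)

lemma K: assumes "idx a = idx b" "idx b = idx c" shows "F4 a b = F4 a c"
proof -
  have "F4 a b = F4 a (mul b (mul (iv b) c))" by (rule G03) (use assms in simp_all)
  also have "mul b (mul (iv b) c) = c" using assms by simp
  finally show ?thesis .
qed

definition kk where "kk z = F4 z (e z)"

lemma K': assumes "idx a = idx b" shows "F4 a b = kk a"
  unfolding kk_def by (rule K) (use assms in simp_all)

lemma kk_mul: assumes "idx a = idx b" shows "kk (mul a b) = kk a * kk b"
proof -
  have "F4 (mul a b) (e a) = F4 a (mul b (e a)) * F4 b (e a)" by (rule G04) (use assms in simp_all)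
  moreover have "F4 (mul a b) (e a) = kk (mul a b)" by (rule K') (use assms in simp)
  moreover have "F4 a (mul b (e a)) = kk a" by (rule K') (use assms in simp)
  moreover have "F4 b (e a) = kk b" by (rule K') (use assms in simp)
  ultimately show ?thesis by simp
qed

lemma kk_inv: "invertible_elt (kk a)" unfolding kk_def by (rule F4_inv) simp

lemma kk_e: "kk (e a) = 1"
proof -
  have "kk (mul (e a) (e a)) = kk (e a) * kk (e a)" by (rule kk_mul) simp
  then have "kk (e a) * kk (e a) = kk (e a)" by simp
  then show ?thesis by (intro idem_one kk_inv)
qed

lemma kk_iv: "kk (iv b) * kk b = 1"
proof -
  have "kk (mul (iv b) b) = kk (iv b) * kk b" by (rule kk_mul) simp
  then show ?thesis using kk_e[of b] by simp
qed

lemma F1_iv: assumes "idx a = idx b" shows "F1 b (iv a) = kk a"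
proof -
  have "F1 b (iv a) = F4 (iv (iv a)) (mul b (iv a))" by (rule G1i) (use assms in simp)
  also have "\<dots> = kk a" by simp (rule K', use assms in simp)
  finally show ?thesis .
qed

lemma F1_e: "F1 x y = f1 (e x) y" unfolding F1_def by (simp add: g1_conv)

lemma alex: "mcq_alexander_pair idx mul e iv tr F1 F2"
  unfolding mcq_alexander_pair_def
proof (intro conjI allI impI)
  fix a b assume ab: "idx a = idx b"
  have 1: "F1 a b = kk (iv b)"
    using G1i[OF ab] K'[of "iv b" "mul a b"] ab by simp
  have 2: "F1 a (mul (iv a) b) = kk (iv b) * kk a"
  proof -
    have "F1 a (mul (iv a) b) = F4 (iv (mul (iv a) b)) (mul a (mul (iv a) b))"
      by (rule G1i) (use ab in simp)
    also have "\<dots> = kk (iv (mul (iv a) b))" by (rule K') (use ab in simp)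
    also have "iv (mul (iv a) b) = mul (iv b) a" using ab by (simp add: iv_mul)
    also have "kk (mul (iv b) a) = kk (iv b) * kk a" by (rule kk_mul) (use ab in simp)
    finally show ?thesis .
  qed
  have 3: "1 + kk b * F2 a b = kk a"
  proof -
    have "F4 b (tr a b) = kk b" by (rule K') (use ab in \<open>simp add: tr_grp\<close>)
    moreover have "F4 a b = kk a" by (rule K'[OF ab])
    ultimately show ?thesis using G1ii[OF ab] by simp
  qed
  have "kk (iv b) * (1 + kk b * F2 a b) = kk (iv b) * kk a" using 3 by simp
  then have "kk (iv b) + (kk (iv b) * kk b) * F2 a b = kk (iv b) * kk a"
    by (simp add: distrib_left mult.assoc)
  then show "F1 a b + F2 a b = F1 a (mul (iv a) b)" using 1 2 kk_iv[of b] by simp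
next
  fix a b x assume ab: "idx a = idx b"
  show "F1 a x = F1 b x" using e_eq[OF ab] by (simp add: F1_e)
  have i: "idx (tr a x) = idx (tr b x)" by (rule idx_tr[OF ab])
  have "F4 (tr a x) (tr b x) = kk (tr a x)" by (rule K'[OF i])
  moreover have "F1 (tr b x) (tr (iv a) x) = kk (tr a x)"
    using F1_iv[OF i] by (simp add: tr_iv)
  ultimately show "F2 (mul a b) x = F2 a x + F1 (tr b x) (tr (iv a) x) * F2 b x"
    using G4iii[OF ab] by simp
next
  fix x a show "F1 x (e a) = 1" by (rule G2i)
next
  fix x a b assume ab: "idx a = idx b"
  show "F1 x (mul a b) = F1 (tr x a) b * F1 x a" by (rule G2ii[OF ab])
  show "F2 x (mul a b) = F1 (tr x a) b * F2 x a" by (rule G2iii[OF ab])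
next
  fix x y z
  show "F1 (tr x y) z * F1 x y = F1 (tr x z) (tr y z) * F1 x z" by (rule G3i)
  show "F1 (tr x y) z * F2 x y = F2 (tr x z) (tr y z) * F1 y z" by (rule G3ii)
  show "F2 (tr x y) z = F1 (tr x z) (tr y z) * F2 x z + F2 (tr x z) (tr y z) * F2 y z" by (rule G3iii)
qed

definition Q2 where "Q2 a b = smul (f3 (mul a b) (mul (iv b) (iv a))) (\<phi>2 a b)"

lemma Q2P2: "idx a = idx b \<Longrightarrow> Q2 a b = P2 a b"
  unfolding Q2_def P2_def by (rule p2_conv)

lemma cocyc: "twisted_2_cocycle idx mul e iv tr smul F1 F2 P1 Q2"
  unfolding twisted_2_cocycle_def
proof (intro conjI allI impI)
  fix a b c assume abc: "idx a = idx b \<and> idx b = idx c"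
  then have ab: "idx a = idx b" and bc: "idx b = idx c" by auto
  have "F1 a (iv a) = kk a" by (rule F1_iv) simp
  moreover have "F4 a (mul b c) = kk a" by (rule K') (use ab bc in simp)
  ultimately show "Q2 a b + Q2 (mul a b) c = smul (F1 a (iv a)) (Q2 b c) + Q2 a (mul b c)"
    using G0phi[OF ab bc] ab bc by (simp add: Q2P2)
next
  fix a b assume ab: "idx a = idx b"
  have "F1 b (iv b) = kk b" by (rule F1_iv) simp
  moreover have "F4 b (tr a b) = kk b" by (rule K') (use ab in \<open>simp add: tr_grp\<close>)
  moreover have "idx (mul (mul (iv b) a) b) = idx b" using ab by simp
  ultimately show "smul (F1 b (iv b)) (P1 a b) + Q2 b (mul (mul (iv b) a) b) = Q2 a b"
    using G1phi[OF ab] ab by (simp add: Q2P2 tr_grp[OF ab])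
next
  fix x a b assume ab: "idx a = idx b"
  show "smul (F2 x (mul a b)) (Q2 a b) + P1 x (mul a b) = smul (F1 (tr x a) b) (P1 x a) + P1 (tr x a) b"
    using G2phi[OF ab] ab by (simp add: Q2P2)
next
  fix x y z
  show "smul (F1 (tr x y) z) (P1 x y) + P1 (tr x y) z
          = smul (F1 (tr x z) (tr y z)) (P1 x z) + smul (F2 (tr x z) (tr y z)) (P1 y z)
            + P1 (tr x z) (tr y z)" by (rule G3phi)
next
  fix a b x assume ab: "idx a = idx b"
  have i: "idx (tr a x) = idx (tr b x)" by (rule idx_tr[OF ab])
  have "F4 (tr a x) (tr b x) = kk (tr a x)" by (rule K'[OF i])
  moreover have "F1 (tr a x) (tr (iv a) x) = kk (tr a x)"
    using F1_iv[of "tr a x" "tr a x"] by (simp add: tr_iv)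
  ultimately show "smul (F1 (mul a b) x) (Q2 a b) + P1 (mul a b) x
          = P1 a x + smul (F1 (tr a x) (tr (iv a) x)) (P1 b x) + Q2 (tr a x) (tr b x)"
    using G4phi[OF ab] ab i by (simp add: Q2P2)
qed

lemma final: "augmented_mcq_alexander_pair idx mul e iv tr smul
           (\<lambda>x y. f1 (e x) y)
           (\<lambda>x y. f3 (tr x y) (tr (iv x) y) * f2 x y * f3 (e y) y)
           (\<lambda>x y. smul (f3 (tr x y) (tr (iv x) y)) (\<phi>1 x y))
           (\<lambda>a b. smul (f3 (mul a b) (mul (iv b) (iv a))) (\<phi>2 a b))"
proof -
  have e1: "(\<lambda>x y. f1 (e x) y) = F1" by (intro ext) (simp add: F1_e)
  have e2: "(\<lambda>x y. f3 (tr x y) (tr (iv x) y) * f2 x y * f3 (e y) y) = F2"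
    by (intro ext) (simp add: F2_def g2_conv)
  have e3: "(\<lambda>x y. smul (f3 (tr x y) (tr (iv x) y)) (\<phi>1 x y)) = P1"
    by (intro ext) (simp add: P1_def p1_conv)
  have e4: "(\<lambda>a b. smul (f3 (mul a b) (mul (iv b) (iv a))) (\<phi>2 a b)) = Q2"
    by (intro ext) (simp add: Q2_def)
  show ?thesis unfolding e1 e2 e3 e4 augmented_mcq_alexander_pair_def using alex cocyc by simp
qed

end

theorem lemma4p2:
  fixes idx :: "'x \<Rightarrow> 'l" and mul :: "'x \<Rightarrow> 'x \<Rightarrow> 'x" and e iv :: "'x \<Rightarrow> 'x"
    and tr :: "'x \<Rightarrow> 'x \<Rightarrow> 'x"
    and smul :: "'r::ring_1 \<Rightarrow> 'm::ab_group_add \<Rightarrow> 'm"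
    and f1 f2 f3 f4 :: "'x \<Rightarrow> 'x \<Rightarrow> 'r" and \<phi>1 \<phi>2 :: "'x \<Rightarrow> 'x \<Rightarrow> 'm"
  assumes "mcq idx mul e iv tr"
    and "left_module smul"
    and "six_tuple_conditions idx mul e iv tr smul f1 f2 f3 f4 \<phi>1 \<phi>2"
  shows "augmented_mcq_alexander_pair idx mul e iv tr smul
           (\<lambda>x y. f1 (e x) y)
           (\<lambda>x y. f3 (tr x y) (tr (iv x) y) * f2 x y * f3 (e y) y)
           (\<lambda>x y. smul (f3 (tr x y) (tr (iv x) y)) (\<phi>1 x y))
           (\<lambda>a b. smul (f3 (mul a b) (mul (iv b) (iv a))) (\<phi>2 a b))"
proof -
  interpret L idx mul e iv tr smul f1 f2 f3 f4 \<phi>1 \<phi>2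
    using assms by unfold_locales
  show ?thesis by (rule final)
qed

end
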